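(* For every finite multiset $\Gamma$ of ILL formulae and ILL formula $\varphi$: the sequent $(\Gamma:\varphi)$ is valid if and only if $\Gamma\Vdash^{\varnothing}_{\varnothing}\varphi$, where the subscript $\varnothing$ is the empty base.
   Context: Fix a set $\mathbb{A}$ of propositional atoms. ILL formulae: $\phi ::= p\in\mathbb{A} \mid \top \mid 0 \mid 1 \mid \phi\multimap\phi \mid \phi\otimes\phi \mid \phi\,\&\,\phi \mid \phi\oplus\phi \mid\ !\phi$. All multisets are finite; "$\Gamma,\Delta$" denotes multiset union. Atomic rules and bases: an atomic sequent is $P\Rightarrow p$ with $P$ a multiset of atoms, $p$ an atom. An atomic box is a multiset of atomic sequents. An atomic rule is a triple $\langle\mathbf{A},\mathbf{S},p\rangle$ with $\mathbf{A}$ a multiset of atomic boxes, $\mathbf{S}$ an atomic box, $p$ an atom. A base is a set of atomic rules. An atom $p$ is persistent in $\mathcal{B}$ if some $\langle\varnothing,\mathbf{S},p\rangle\in\mathcal{B}$ has $\mathbf{S}\neq\varnothing$. Derivability $\vdash_{\mathcal{B}}$: (Ref) $p\vdash_{\mathcal{B}}p$; (App) if $\langle\mathbf{A},\mathbf{S},p\rangle\in\mathcal{B}$ with $\mathbf{A}=\{\mathbf{T}_1,\dots,\mathbf{T}_m\}$, and there are atomic multisets $C_1,\dots,C_n$ ($n\ge m$) and a multiset $D=\{d_{m+1},\dots,d_n\}$ of atoms persistent in $\mathcal{B}$ such that $C_i,Q\vdash_{\mathcal{B}}q$ for every $i\le m$ and every $Q\Rightarrow q\in\mathbf{T}_i$,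 $C_j\vdash_{\mathcal{B}}d_j$ for every $m<j\le n$, and $D,U\vdash_{\mathcal{B}}v$ for every $U\Rightarrow v\in\mathbf{S}$, then $C_1,\dots,C_n\vdash_{\mathcal{B}}p$. Support $\Vdash^L_{\mathcal{B}}$ (base $\mathcal{B}$, atomic multiset $L$), by induction on formulae: $\Vdash^L_{\mathcal{B}}p$ iff $L\vdash_{\mathcal{B}}p$; $\Vdash^L_{\mathcal{B}}\varphi\multimap\psi$ iff $\varphi\Vdash^L_{\mathcal{B}}\psi$; $\Vdash^L_{\mathcal{B}}\varphi\otimes\psi$ iff for all $\mathcal{C}\supseteq\mathcal{B}$, atomic $K$, atoms $p$: if $\varphi,\psi\Vdash^K_{\mathcal{C}}p$ then $\Vdash^{L,K}_{\mathcal{C}}p$; $\Vdash^L_{\mathcal{B}}1$ iff for all $\mathcal{C}\supseteq\mathcal{B}$, $K$, $p$: if $\Vdash^K_{\mathcal{C}}p$ then $\Vdash^{L,K}_{\mathcal{C}}p$; $\Vdash^L_{\mathcal{B}}\varphi\&\psi$ iff $\Vdash^L_{\mathcal{B}}\varphi$ and $\Vdash^L_{\mathcal{B}}\psi$; $\Vdash^L_{\mathcal{B}}\varphi\oplus\psi$ iff for all $\mathcal{C}\supseteq\mathcal{B}$, $K$, $p$: if $\varphi\Vdash^K_{\mathcal{C}}p$ and $\psi\Vdash^K_{\mathcal{C}}p$ then $\Vdash^{L,K}_{\mathcal{C}}p$; $\Vdash^L_{\mathcal{B}}0$ iff $\Vdash^{L,K}_{\mathcal{B}}p$ for all atoms $p$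 and atomic $K$; $\Vdash^L_{\mathcal{B}}\top$ always; $\Vdash^L_{\mathcal{B}}!\varphi$ iff for all $\mathcal{C}\supseteq\mathcal{B}$, $K$, $p$: if (for all $\mathcal{D}\supseteq\mathcal{C}$, $\Vdash^{\varnothing}_{\mathcal{D}}\varphi$ implies $\Vdash^K_{\mathcal{D}}p$) then $\Vdash^{L,K}_{\mathcal{C}}p$. For nonempty multisets: $\Vdash^L_{\mathcal{B}}\Gamma,\Delta$ iff $L=K,M$ with $\Vdash^K_{\mathcal{B}}\Gamma$ and $\Vdash^M_{\mathcal{B}}\Delta$. For a nonempty antecedent written $!\Delta,\Theta$, where $!\Delta$ collects the formulae with top-level connective $!$ (with $\Delta$ the formulae under those $!$) and $\Theta$ contains none: $!\Delta,\Theta\Vdash^L_{\mathcal{B}}\varphi$ iff for all $\mathcal{C}\supseteq\mathcal{B}$ and atomic $K$, if $\Vdash^{\varnothing}_{\mathcal{C}}\delta$ for every $\delta\in\Delta$ and $\Vdash^K_{\mathcal{C}}\Theta$ then $\Vdash^{L,K}_{\mathcal{C}}\varphi$ (when $\Theta$ is empty, $K$ is empty). An empty antecedent: $\varnothing\Vdash^L_{\mathcal{B}}\varphi$ means $\Vdash^L_{\mathcal{B}}\varphi$. A sequent $(\Gamma:\varphi)$ is valid iff $\Gamma\Vdash^{\varnothing}_{\mathcal{B}}\varphi$ for all bases $\mathcal{B}$. *)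

theory Defs
  imports Main "HOL-Library.Multiset"
begin

datatype 'a form =
    Atom 'a
  | Top
  | Zero
  | One
  | Lolli "'a form" "'a form"
  | Tensor "'a form" "'a form"
  | With "'a form" "'a form"
  | Plus "'a form" "'a form"
  | Bang "'a form"

type_synonym 'a aseq = "'a multiset \<times> 'a"
type_synonym 'a abox = "'a aseq multiset"
type_synonym 'a arule = "'a abox multiset \<times> 'a abox \<times> 'a"
type_synonym 'a base = "'a arule set"

definition persistent :: "'a base \<Rightarrow> 'a \<Rightarrow> bool" where
  "persistent B p \<longleftrightarrow> (\<exists>S. ({#}, S, p) \<in> B \<and> S \<noteq> {#})"

text \<open>In (App) the boxes T_1..T_m of the multiset A are
  listed as Ts, the multisets C_1..C_m as Cs, the multisets C_(m+1)..C_n as Es and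
  the persistent atoms d_(m+1)..d_n as ds.\<close>

inductive deriv :: "'a base \<Rightarrow> 'a multiset \<Rightarrow> 'a \<Rightarrow> bool" for B where
  Ref: "deriv B {#p#} p"
| App: "\<lbrakk> (A, S, p) \<in> B; mset Ts = A; length Cs = length Ts;
          \<forall>i<length Ts. \<forall>Qq\<in>set_mset (Ts ! i). deriv B (Cs ! i + fst Qq) (snd Qq);
          length Es = length ds; \<forall>d\<in>set ds. persistent B d;
          \<forall>j<length ds. deriv B (Es ! j) (ds ! j);
          \<forall>Uv\<in>set_mset S. deriv B (mset ds + fst Uv) (snd Uv) \<rbrakk>
        \<Longrightarrow> deriv B (sum_list Cs + sum_list Es) p"

text \<open>For the clauses whose definition refers to a
  sequent with antecedent built from one or two formulae, the antecedent clause of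
  the paper is unfolded inline: a formula !delta in the antecedent contributes the
  requirement \<Vdash>^\<emptyset>_C delta (and no resources), any other formula chi
  contributes \<Vdash>^K'_C chi for its share K' of the resources K.\<close>

fun supp :: "'a base \<Rightarrow> 'a multiset \<Rightarrow> 'a form \<Rightarrow> bool" where
  "supp B L (Atom p) = deriv B L p"
| "supp B L Top = True"
| "supp B L Zero = (\<forall>K p. deriv B (L + K) p)"
| "supp B L One =
     (\<forall>C K p. B \<subseteq> C \<longrightarrow> deriv C K p \<longrightarrow> deriv C (L + K) p)"
| "supp B L (Lolli \<phi> \<psi>) =
     (\<forall>C K. B \<subseteq> C \<longrightarrow>
        (case \<phi> of Bang \<delta> \<Rightarrow> K = {#} \<and> supp C {#} \<delta> | _ \<Rightarrow> supp C K \<phi>)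
        \<longrightarrow> supp C (L + K) \<psi>)"
| "supp B L (Tensor \<phi> \<psi>) =
     (\<forall>C K p. B \<subseteq> C \<longrightarrow>
        (\<forall>C' K'. C \<subseteq> C' \<longrightarrow>
           (\<exists>K1 K2. K' = K1 + K2
              \<and> (case \<phi> of Bang \<delta> \<Rightarrow> K1 = {#} \<and> supp C' {#} \<delta> | _ \<Rightarrow> supp C' K1 \<phi>)
              \<and> (case \<psi> of Bang \<delta> \<Rightarrow> K2 = {#} \<and> supp C' {#} \<delta> | _ \<Rightarrow> supp C' K2 \<psi>))
           \<longrightarrow> deriv C' (K + K') p)
        \<longrightarrow> deriv C (L + K) p)"
| "supp B L (With \<phi> \<psi>) = (supp B L \<phi> \<and> supp B L \<psi>)"
| "supp B L (Plus \<phi> \<psi>) =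
     (\<forall>C K p. B \<subseteq> C \<longrightarrow>
        (\<forall>C' K'. C \<subseteq> C' \<longrightarrow>
           (case \<phi> of Bang \<delta> \<Rightarrow> K' = {#} \<and> supp C' {#} \<delta> | _ \<Rightarrow> supp C' K' \<phi>)
           \<longrightarrow> deriv C' (K + K') p)
        \<longrightarrow> (\<forall>C' K'. C \<subseteq> C' \<longrightarrow>
           (case \<psi> of Bang \<delta> \<Rightarrow> K' = {#} \<and> supp C' {#} \<delta> | _ \<Rightarrow> supp C' K' \<psi>)
           \<longrightarrow> deriv C' (K + K') p)
        \<longrightarrow> deriv C (L + K) p)"
| "supp B L (Bang \<phi>) =
     (\<forall>C K p. B \<subseteq> C \<longrightarrow>
        (\<forall>D. C \<subseteq> D \<longrightarrow> supp D {#} \<phi> \<longrightarrow> deriv D K p)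
        \<longrightarrow> deriv C (L + K) p)"

text \<open>Support of a multiset of formulae: L splits into one part per formula.
  (For the empty multiset this forces L to be empty, matching the convention that
  K is empty when Theta is empty.)\<close>

fun supp_list :: "'a base \<Rightarrow> 'a multiset \<Rightarrow> 'a form list \<Rightarrow> bool" where
  "supp_list B L [] = (L = {#})"
| "supp_list B L (\<phi> # \<Gamma>) = (\<exists>K M. L = K + M \<and> supp B K \<phi> \<and> supp_list B M \<Gamma>)"

definition supp_ms :: "'a base \<Rightarrow> 'a multiset \<Rightarrow> 'a form multiset \<Rightarrow> bool" where
  "supp_ms B L \<Gamma> \<longleftrightarrow> (\<exists>xs. mset xs = \<Gamma> \<and> supp_list B L xs)"

fun is_bang :: "'a form \<Rightarrow> bool" where
  "is_bang (Bang _) = True"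
| "is_bang _ = False"

definition seq_supp :: "'a base \<Rightarrow> 'a form multiset \<Rightarrow> 'a multiset \<Rightarrow> 'a form \<Rightarrow> bool" where
  "seq_supp B \<Gamma> L \<phi> \<longleftrightarrow>
     (if \<Gamma> = {#} then supp B L \<phi>
      else (\<forall>C K. B \<subseteq> C \<longrightarrow>
              (\<forall>\<delta>. Bang \<delta> \<in># \<Gamma> \<longrightarrow> supp C {#} \<delta>)
              \<longrightarrow> supp_ms C K (filter_mset (\<lambda>\<chi>. \<not> is_bang \<chi>) \<Gamma>)
              \<longrightarrow> supp C (L + K) \<phi>))"

definition valid :: "'a form multiset \<Rightarrow> 'a form \<Rightarrow> bool" where
  "valid \<Gamma> \<phi> \<longleftrightarrow> (\<forall>B. seq_supp B \<Gamma> {#} \<phi>)"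

end

theory Submission
  imports Defs
begin

lemma persistent_mono: "persistent B d \<Longrightarrow> B \<subseteq> C \<Longrightarrow> persistent C d"
  unfolding persistent_def by blast

lemma deriv_mono: "deriv B L p \<Longrightarrow> B \<subseteq> C \<Longrightarrow> deriv C L p"
proof (induction rule: deriv.induct)
  case (Ref p)
  show ?case by (rule deriv.Ref)
next
  case (App A S p Ts Cs Es ds)
  show ?case
    apply (rule deriv.App[of A S p C Ts Cs Es ds])
    using App by (auto intro: persistent_mono)
qed

lemma supp_mono: "supp B L \<phi> \<Longrightarrow> B \<subseteq> C \<Longrightarrow> supp C L \<phi>"
proof (induction \<phi> arbitrary: L)
  case (Atom x)
  then show ?case by (auto intro: deriv_mono)
next
  case Zero
  then show ?case by (auto intro: deriv_mono)
next
  case (With \<phi>1 \<phi>2)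
  then show ?case by auto
qed (simp only: supp.simps; meson order_trans)+

theorem lemma4:
  fixes \<Gamma> :: "'a form multiset" and \<phi> :: "'a form"
  shows "valid \<Gamma> \<phi> \<longleftrightarrow> seq_supp {} \<Gamma> {#} \<phi>"
proof
  assume "valid \<Gamma> \<phi>" then show "seq_supp {} \<Gamma> {#} \<phi>" unfolding valid_def by blast
next
  assume h: "seq_supp {} \<Gamma> {#} \<phi>"
  show "valid \<Gamma> \<phi>" unfolding valid_def
  proof
    fix B :: "'a base"
    show "seq_supp B \<Gamma> {#} \<phi>"
    proof (cases "\<Gamma> = {#}")
      case True
      then show ?thesis using h supp_mono[of "{}" "{#}" \<phi> B] by (simp add: seq_supp_def)
    next
      case False
      then show ?thesis using h by (simp add: seq_supp_def)
    qed
  qed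
qed

end
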